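(* Let $C\in\mathbb{R}^{n\times n}$ be symmetric and $\rho>0$. A pair $(\tilde\sigma,\sigma)\in\mathbb{R}^{n\times r}\times\mathbb{R}^{n\times r}$ is a critical point of $G_\rho$ if and only if $\sigma=\tilde\sigma$ and $\tilde\sigma$ is a critical point of the problem $\min\{\langle C,\sigma\sigma^\top\rangle:\sigma\in\mathcal{M}\}$; in this sense the two problems have the same critical points.
   Context: $\langle A,B\rangle=\mathrm{Tr}(A^\top B)$, $\|\cdot\|_F$ Frobenius norm. For $\sigma\in\mathbb{R}^{n\times r}$, $\sigma_i$ is its $i$-th row; $\mathcal{M}=\{\sigma:\|\sigma_i\|=1\ \forall i\}$, $\mathcal{I}_S$ the indicator function of $S$. $G_\rho(\tilde\sigma,\sigma)=\langle C,\tilde\sigma\tilde\sigma^\top\rangle+\frac\rho2\|\tilde\sigma-\sigma\|_F^2+\sum_{i=1}^n\mathcal{I}_{\{\|u\|=1\}}(\tilde\sigma_i)$. A critical point of a function is a point where $0$ belongs to its limiting subdifferential; a critical point of the constrained problem is $\tilde\sigma\in\mathcal{M}$ with $0\in2C\tilde\sigma+\partial\big(\sum_i\mathcal{I}_{\{\|u\|=1\}}(\tilde\sigma_i)\big)$. *)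

theory Defs
  imports "HOL-Analysis.Analysis" "HOL-Library.Extended_Real"
begin

text \<open>Matrices in R^{n x r} are modelled as real^'r^'n (row i is s $ i).
  The HOL-Analysis inner product / norm on real^'r^'n is the Frobenius one.\<close>

definition frechet_subdiff :: "('a::real_inner \<Rightarrow> ereal) \<Rightarrow> 'a \<Rightarrow> 'a set" where
  "frechet_subdiff f x = {v. \<bar>f x\<bar> \<noteq> \<infinity> \<and>
     (\<forall>e>0. \<exists>d>0. \<forall>y. norm (y - x) < d \<longrightarrow>
        f x + ereal (inner v (y - x)) - ereal (e * norm (y - x)) \<le> f y)}"

definition limiting_subdiff :: "('a::real_inner \<Rightarrow> ereal) \<Rightarrow> 'a \<Rightarrow> 'a set" where
  "limiting_subdiff f x = {v. \<bar>f x\<bar> \<noteq> \<infinity> \<and>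
     (\<exists>xs vs. (\<forall>k. vs k \<in> frechet_subdiff f (xs k)) \<and> xs \<longlonglongrightarrow> x \<and>
        (\<lambda>k. f (xs k)) \<longlonglongrightarrow> f x \<and> vs \<longlonglongrightarrow> v)}"

definition critical_point :: "('a::real_inner \<Rightarrow> ereal) \<Rightarrow> 'a \<Rightarrow> bool" where
  "critical_point f x \<longleftrightarrow> 0 \<in> limiting_subdiff f x"

definition ind :: "'a set \<Rightarrow> 'a \<Rightarrow> ereal" where
  "ind S x = (if x \<in> S then 0 else \<infinity>)"

definition row_ind :: "real^'r^'n \<Rightarrow> ereal" where
  "row_ind s = (\<Sum>i\<in>UNIV. ind {u. norm u = 1} (s $ i))"

definition oblique :: "(real^'r^'n) set" where
  "oblique = {s. \<forall>i. norm (s $ i) = 1}"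

definition G_rho :: "real^'n^'n \<Rightarrow> real \<Rightarrow> ((real^'r^'n) \<times> (real^'r^'n)) \<Rightarrow> ereal" where
  "G_rho C \<rho> p =
     ereal (inner C (fst p ** transpose (fst p)) + \<rho> / 2 * (norm (fst p - snd p))^2)
       + row_ind (fst p)"

definition constrained_critical :: "real^'n^'n \<Rightarrow> real^'r^'n \<Rightarrow> bool" where
  "constrained_critical C st \<longleftrightarrow> st \<in> oblique \<and>
     (\<exists>v \<in> limiting_subdiff row_ind st. 2 *\<^sub>R (C ** st) + v = 0)"

end

theory Submission
  imports Defs
begin

lemma inner_mm: "inner (C::real^'n^'n) (a ** transpose (b::real^'r^'n)) = (\<Sum>i\<in>UNIV. \<Sum>j\<in>UNIV. C$i$j * inner (a$i) (b$j))"
  by (simp add: inner_vec_def matrix_matrix_mult_def transpose_def sum_distrib_left mult.commute)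

lemma inner_mm2: "inner (C::real^'n^'n) (a ** transpose (b::real^'r^'n)) = inner (C ** b) a"
  unfolding inner_vec_def matrix_matrix_mult_def transpose_def
  apply (simp add: sum_distrib_left sum_distrib_right)
  apply (subst sum.swap) apply (rule sum.cong, simp)
  apply (subst sum.swap) apply (simp add: mult_ac) apply (rule sum.swap)
  done

lemma row_ind_eq: "row_ind s = ind oblique s"
proof (cases "s \<in> oblique")
  case True then show ?thesis by (simp add: row_ind_def ind_def oblique_def)
next
  case False
  then obtain i where "norm (s$i) \<noteq> 1" by (auto simp: oblique_def)
  then have "row_ind s = \<infinity>" unfolding row_ind_def
    by (subst sum_Pinfty) (auto simp: ind_def)
  then show ?thesis using False by (simp add: ind_def)
qed


lemma inner_transpose: "inner (transpose (X::real^'a^'b)) (transpose Y) = inner X Y"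
  unfolding inner_vec_def transpose_def by (simp, rule sum.swap)

lemma vec_nth_deriv[derivative_intros]: "((\<lambda>x. x $ i) has_derivative (\<lambda>x. x $ i)) F"
  by (rule bounded_linear_imp_has_derivative[OF bounded_linear_vec_nth])

lemma quad_deriv:
  fixes C :: "real^'n^'n" and x :: "real^'r^'n"
  shows "((\<lambda>a. inner C (a ** transpose a)) has_derivative
     (\<lambda>d. inner C (d ** transpose x) + inner C (x ** transpose d))) (at x)"
proof -
  have e: "(\<lambda>a. inner C (a ** transpose a)) = (\<lambda>a. \<Sum>i\<in>UNIV. \<Sum>j\<in>UNIV. C$i$j * inner (a$i) (a$j))"
    by (simp add: inner_mm)
  show ?thesis unfolding e inner_mm
    apply (rule derivative_eq_intros refl)+
    apply (simp add: sum.distrib algebra_simps inner_commute)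
    done
qed


lemma mm_scaleR: "(C::real^'n^'m) ** (c *\<^sub>R (a::real^'r^'n)) = c *\<^sub>R (C ** a)"
  by (simp add: vec_eq_iff matrix_matrix_mult_def sum_distrib_left mult_ac)

lemma bl_mm: "bounded_linear (\<lambda>a::real^'r^'n. (C::real^'n^'m) ** a)"
  by (rule linear_conv_bounded_linear[THEN iffD1], rule linearI)
     (simp_all add: matrix_add_ldistrib mm_scaleR)

lemma inner_mm_sym:
  assumes "transpose C = C"
  shows "inner (C::real^'n^'n) ((x::real^'r^'n) ** transpose d) = inner (C ** x) d"
proof -
  have "x ** transpose d = transpose (d ** transpose x)" by (simp add: matrix_transpose_mul)
  hence "inner C (x ** transpose d) = inner (transpose C) (d ** transpose x)"
    using inner_transpose[of "transpose C" "d ** transpose x"] by simp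
  also have "\<dots> = inner (C ** x) d" using assms inner_mm2 by metis
  finally show ?thesis .
qed

lemma mm_sym_inner:
  assumes "transpose C = C"
  shows "inner (x::real^'r^'n) ((C::real^'n^'n) ** a) = inner a (C ** x)"
  using inner_mm2[of C x a] inner_mm_sym[OF assms, of x a] by (simp add: inner_commute)

definition phi :: "real^'n^'n \<Rightarrow> real \<Rightarrow> ((real^'r^'n) \<times> (real^'r^'n)) \<Rightarrow> real" where
  "phi C \<rho> p = inner C (fst p ** transpose (fst p)) + \<rho> / 2 * (norm (fst p - snd p))^2"

definition grad :: "real^'n^'n \<Rightarrow> real \<Rightarrow> ((real^'r^'n) \<times> (real^'r^'n)) \<Rightarrow> ((real^'r^'n) \<times> (real^'r^'n))" where
  "grad C \<rho> p = (2 *\<^sub>R (C ** fst p) + \<rho> *\<^sub>R (fst p - snd p), \<rho> *\<^sub>R (snd p - fst p))"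

lemma phi_deriv:
  assumes "transpose C = C"
  shows "(phi C \<rho> has_derivative (\<lambda>d. inner (grad C \<rho> x) d)) (at x)"
proof -
  have q: "((\<lambda>p. inner C (fst p ** transpose (fst p))) has_derivative
     (\<lambda>d. inner C (fst d ** transpose (fst x)) + inner C (fst x ** transpose (fst d)))) (at x)"
    using has_derivative_compose[OF has_derivative_fst[OF has_derivative_ident] quad_deriv[of C "fst x"]]
    by simp
  have e: "phi C \<rho> = (\<lambda>p. inner C (fst p ** transpose (fst p)) + \<rho> / 2 * inner (fst p - snd p) (fst p - snd p))"
    by (simp add: phi_def fun_eq_iff power2_norm_eq_inner)
  show ?thesis unfolding e
    apply (rule has_derivative_eq_rhs[OF has_derivative_add[OF q]])
     apply (rule derivative_eq_intros refl)+
    apply (auto simp: fun_eq_iff grad_def inner_mm_sym[OF assms] inner_mm2 mm_sym_inner[OF assms] algebra_simps inner_diff_left inner_diff_right inner_commute)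
    done
qed

lemma phi_cont: "isCont (phi C \<rho>) x" if "transpose C = C"
  using phi_deriv[OF that] has_derivative_continuous by blast

lemma grad_tendsto: "(X \<longlonglongrightarrow> x) \<Longrightarrow> ((\<lambda>k. grad C \<rho> (X k)) \<longlonglongrightarrow> grad C \<rho> x)"
  unfolding grad_def
  by (intro tendsto_intros bounded_linear.tendsto[OF bl_mm])


definition ncone :: "'a::real_inner set \<Rightarrow> 'a \<Rightarrow> 'a \<Rightarrow> bool" where
  "ncone S x v \<longleftrightarrow> (\<forall>e>0. \<exists>d>0. \<forall>y\<in>S. norm (y - x) < d \<longrightarrow> inner v (y - x) \<le> e * norm (y - x))"

lemma pt_eq: "x \<in> S \<Longrightarrow>
  (ereal (f x) + ind S x + ereal a - ereal b \<le> ereal (f y) + ind S y) \<longleftrightarrow> (y \<in> S \<longrightarrow> f x + a - b \<le> f y)"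
  by (auto simp: ind_def)

lemma fs_char:
  "frechet_subdiff (\<lambda>y. ereal (f y) + ind S y) x =
   {v. x \<in> S \<and> (\<forall>e>0. \<exists>d>0. \<forall>y\<in>S. norm (y - x) < d \<longrightarrow> f x + inner v (y - x) - e * norm (y - x) \<le> f y)}"
proof (cases "x \<in> S")
  case True
  show ?thesis unfolding frechet_subdiff_def pt_eq[OF True]
    using True by (auto simp: ind_def) meson+
next
  case False
  then show ?thesis unfolding frechet_subdiff_def by (auto simp: ind_def)
qed


lemma shift_iff:
  assumes d: "(f has_derivative (\<lambda>d. inner g d)) (at x)"
  shows "(\<forall>e>0. \<exists>d>0. \<forall>y\<in>S. norm (y - x) < d \<longrightarrow> f x + inner v (y - x) - e * norm (y - x) \<le> f y)
     \<longleftrightarrow> ncone S x (v - g)"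
proof
  assume h: "\<forall>e>0. \<exists>d>0. \<forall>y\<in>S. norm (y - x) < d \<longrightarrow> f x + inner v (y - x) - e * norm (y - x) \<le> f y"
  show "ncone S x (v - g)" unfolding ncone_def
  proof (intro allI impI)
    fix e :: real assume e: "e > 0"
    obtain d1 where d1: "d1 > 0" "\<forall>y. norm (y - x) < d1 \<longrightarrow> norm (f y - f x - inner g (y - x)) \<le> e/2 * norm (y - x)"
      using d[unfolded has_derivative_at_alt] e by (meson half_gt_zero)
    obtain d2 where d2: "d2 > 0" "\<forall>y\<in>S. norm (y - x) < d2 \<longrightarrow> f x + inner v (y - x) - e/2 * norm (y - x) \<le> f y"
      using h e by (meson half_gt_zero)
    show "\<exists>d>0. \<forall>y\<in>S. norm (y - x) < d \<longrightarrow> inner (v - g) (y - x) \<le> e * norm (y - x)"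
    proof (intro exI[of _ "min d1 d2"] conjI ballI impI)
      fix y assume "y \<in> S" "norm (y - x) < min d1 d2"
      then have a: "norm (f y - f x - inner g (y - x)) \<le> e/2 * norm (y - x)"
        and b: "f x + inner v (y - x) - e/2 * norm (y - x) \<le> f y" using d1 d2 by auto
      from a have "f y - f x - inner g (y - x) \<le> e/2 * norm (y - x)" by (metis abs_le_D1 real_norm_def)
      with b show "inner (v - g) (y - x) \<le> e * norm (y - x)" by (simp add: inner_diff_left)
    qed (use d1 d2 in auto)
  qed
next
  assume n: "ncone S x (v - g)"
  show "\<forall>e>0. \<exists>d>0. \<forall>y\<in>S. norm (y - x) < d \<longrightarrow> f x + inner v (y - x) - e * norm (y - x) \<le> f y"
  proof (intro allI impI)
    fix e :: real assume e: "e > 0"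
    obtain d1 where d1: "d1 > 0" "\<forall>y. norm (y - x) < d1 \<longrightarrow> norm (f y - f x - inner g (y - x)) \<le> e/2 * norm (y - x)"
      using d[unfolded has_derivative_at_alt] e by (meson half_gt_zero)
    obtain d2 where d2: "d2 > 0" "\<forall>y\<in>S. norm (y - x) < d2 \<longrightarrow> inner (v - g) (y - x) \<le> e/2 * norm (y - x)"
      using n e unfolding ncone_def by (meson half_gt_zero)
    show "\<exists>d>0. \<forall>y\<in>S. norm (y - x) < d \<longrightarrow> f x + inner v (y - x) - e * norm (y - x) \<le> f y"
    proof (intro exI[of _ "min d1 d2"] conjI ballI impI)
      fix y assume "y \<in> S" "norm (y - x) < min d1 d2"
      then have a: "norm (f y - f x - inner g (y - x)) \<le> e/2 * norm (y - x)"
        and b: "inner (v - g) (y - x) \<le> e/2 * norm (y - x)" using d1 d2 by auto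
      from a have "-(f y - f x - inner g (y - x)) \<le> e/2 * norm (y - x)" by (metis abs_le_D2 real_norm_def)
      with b show "f x + inner v (y - x) - e * norm (y - x) \<le> f y" by (simp add: inner_diff_left)
    qed (use d1 d2 in auto)
  qed
qed

lemma ncone_prod:
  assumes a: "a \<in> S"
  shows "ncone (S \<times> UNIV) (a, b) (w, z) \<longleftrightarrow> ncone S a w \<and> z = 0"
proof
  assume n: "ncone (S \<times> UNIV) (a, b) (w, z)"
  show "ncone S a w \<and> z = 0"
  proof
    show "ncone S a w" unfolding ncone_def
    proof (intro allI impI)
      fix e :: real assume "e > 0"
      then obtain d where d: "d > 0" "\<forall>y\<in>S \<times> UNIV. norm (y - (a,b)) < d \<longrightarrow> inner (w,z) (y - (a,b)) \<le> e * norm (y - (a,b))"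
        using n unfolding ncone_def by blast
      show "\<exists>d>0. \<forall>y\<in>S. norm (y - a) < d \<longrightarrow> inner w (y - a) \<le> e * norm (y - a)"
      proof (intro exI[of _ d] conjI ballI impI)
        fix y assume "y \<in> S" "norm (y - a) < d"
        then show "inner w (y - a) \<le> e * norm (y - a)"
          using d(2)[rule_format, of "(y, b)"] by (simp add: norm_Pair)
      qed (use d in auto)
    qed
    show "z = 0"
    proof (rule ccontr)
      assume z: "z \<noteq> 0"
      then have nz: "norm z > 0" by simp
      then obtain d where d: "d > 0" "\<forall>y\<in>S \<times> UNIV. norm (y - (a,b)) < d \<longrightarrow> inner (w,z) (y - (a,b)) \<le> norm z / 2 * norm (y - (a,b))"
        using n unfolding ncone_def by (meson half_gt_zero)
      define t where "t = d / (2 * norm z)"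
      have t: "t > 0" using d nz by (simp add: t_def)
      have "norm ((a, b + t *\<^sub>R z) - (a, b)) = t * norm z" using t by (simp add: norm_Pair)
      also have "\<dots> < d" using nz d by (simp add: t_def)
      finally have lt: "norm ((a, b + t *\<^sub>R z) - (a, b)) < d" .
      have mem: "(a, b + t *\<^sub>R z) \<in> S \<times> UNIV" using a by simp
      have "inner (w,z) ((a, b + t *\<^sub>R z) - (a,b)) \<le> norm z / 2 * norm ((a, b + t *\<^sub>R z) - (a, b))"
        using d(2) mem lt by blast
      also have "\<dots> = norm z / 2 * (t * norm z)" using t by (simp add: norm_Pair)
      finally have "inner (w,z) ((a, b + t *\<^sub>R z) - (a,b)) \<le> norm z / 2 * (t * norm z)" .
      then have "t * (norm z)^2 \<le> t * (norm z / 2 * norm z)" by (simp add: power2_norm_eq_inner mult_ac)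
      then have "(norm z)^2 \<le> norm z / 2 * norm z" using t by simp
      then show False using nz mult_pos_pos[OF nz nz] by (simp add: power2_eq_square)
    qed
  qed
next
  assume "ncone S a w \<and> z = 0"
  then show "ncone (S \<times> UNIV) (a, b) (w, z)" unfolding ncone_def
  proof (intro allI impI)
    fix e :: real assume "e > 0"
    then obtain d where d: "d > 0" "\<forall>y\<in>S. norm (y - a) < d \<longrightarrow> inner w (y - a) \<le> e * norm (y - a)"
      using \<open>ncone S a w \<and> z = 0\<close> unfolding ncone_def by blast
    show "\<exists>d>0. \<forall>y\<in>S \<times> UNIV. norm (y - (a, b)) < d \<longrightarrow> inner (w, z) (y - (a, b)) \<le> e * norm (y - (a, b))"
    proof (intro exI[of _ d] conjI ballI impI)
      fix y :: "'a \<times> 'b" assume y: "y \<in> S \<times> UNIV" "norm (y - (a, b)) < d"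
      obtain y1 y2 where yy: "y = (y1, y2)" by fastforce
      have n1: "norm (y1 - a) \<le> norm (y - (a,b))" using norm_fst_le[of "y1 - a" "y2 - b"] yy by simp
      have "inner w (y1 - a) \<le> e * norm (y1 - a)" using d y yy n1 by auto
      also have "\<dots> \<le> e * norm (y - (a,b))" using n1 \<open>e > 0\<close> by simp
      finally show "inner (w, z) (y - (a, b)) \<le> e * norm (y - (a, b))"
        using \<open>ncone S a w \<and> z = 0\<close> yy by simp
    qed (use d in auto)
  qed
qed


lemma G_eq: "G_rho C \<rho> = (\<lambda>p. ereal (phi C \<rho> p) + ind (oblique \<times> UNIV) p)"
  by (auto simp: fun_eq_iff G_rho_def phi_def row_ind_eq ind_def)

lemma row_eq: "row_ind = (\<lambda>y. ereal ((\<lambda>_. 0) y) + ind oblique y)"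
  by (auto simp: fun_eq_iff row_ind_eq)

lemma fsR: "w \<in> frechet_subdiff row_ind a \<longleftrightarrow> a \<in> oblique \<and> ncone oblique a w"
proof -
  have d: "((\<lambda>_. 0::real) has_derivative (\<lambda>d. inner 0 d)) (at a)" by simp
  show ?thesis unfolding row_eq fs_char using shift_iff[OF d, of oblique w] by simp
qed

lemma fsG:
  assumes "transpose C = C"
  shows "v \<in> frechet_subdiff (G_rho C \<rho>) p \<longleftrightarrow> fst p \<in> oblique \<and>
     ncone oblique (fst p) (fst v - fst (grad C \<rho> p)) \<and> snd v = snd (grad C \<rho> p)"
proof -
  have "v \<in> frechet_subdiff (G_rho C \<rho>) p \<longleftrightarrow> p \<in> oblique \<times> UNIV \<and> ncone (oblique \<times> UNIV) p (v - grad C \<rho> p)"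
    unfolding G_eq fs_char mem_Collect_eq shift_iff[OF phi_deriv[OF assms, of \<rho> p], of "oblique \<times> UNIV" v] ..
  also have "\<dots> \<longleftrightarrow> fst p \<in> oblique \<and>
     ncone oblique (fst p) (fst v - fst (grad C \<rho> p)) \<and> snd v = snd (grad C \<rho> p)"
  proof -
    have e1: "v - grad C \<rho> p = (fst v - fst (grad C \<rho> p), snd v - snd (grad C \<rho> p))" by (simp add: prod_eq_iff)
    have e2: "p = (fst p, snd p)" by simp
    show ?thesis
    proof (cases "fst p \<in> oblique")
      case True
      show ?thesis using ncone_prod[OF True, of "snd p" "fst v - fst (grad C \<rho> p)" "snd v - snd (grad C \<rho> p)"]
        True by (subst e1, subst (2) e2) (simp add: mem_Times_iff)
    qed (simp add: mem_Times_iff)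
  qed
  finally show ?thesis .
qed

theorem lemma6:
  fixes C :: "real^'n^'n" and \<rho> :: real and st s :: "real^'r^'n"
  assumes "transpose C = C" and "\<rho> > 0"
  shows "critical_point (G_rho C \<rho>) (st, s) \<longleftrightarrow> s = st \<and> constrained_critical C st"
proof
  assume "critical_point (G_rho C \<rho>) (st, s)"
  then obtain xs vs where fin: "\<bar>G_rho C \<rho> (st, s)\<bar> \<noteq> \<infinity>"
    and vs: "\<forall>k. vs k \<in> frechet_subdiff (G_rho C \<rho>) (xs k)" and xs: "xs \<longlonglongrightarrow> (st, s)"
    and v0: "vs \<longlonglongrightarrow> 0"
    unfolding critical_point_def limiting_subdiff_def mem_Collect_eq by metis
  have st: "st \<in> oblique" using fin by (auto simp: G_eq ind_def split: if_splits)
  have gt: "(\<lambda>k. grad C \<rho> (xs k)) \<longlonglongrightarrow> grad C \<rho> (st, s)" by (rule grad_tendsto[OF xs])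
  have "(\<lambda>k. snd (vs k)) \<longlonglongrightarrow> 0" using tendsto_snd[OF v0] by simp
  moreover have "(\<lambda>k. snd (vs k)) \<longlonglongrightarrow> snd (grad C \<rho> (st, s))"
  proof -
    have "(\<lambda>k. snd (vs k)) = (\<lambda>k. snd (grad C \<rho> (xs k)))" using vs fsG[OF assms(1)] by blast
    then show ?thesis using tendsto_snd[OF gt] by simp
  qed
  ultimately have "snd (grad C \<rho> (st, s)) = 0" using LIMSEQ_unique by blast
  then have sst: "s = st" using assms(2) by (simp add: grad_def)
  define a where "a k = fst (xs k)" for k
  define w where "w k = fst (vs k) - fst (grad C \<rho> (xs k))" for k
  have wl: "w \<longlonglongrightarrow> 0 - fst (grad C \<rho> (st, s))" unfolding w_def
    using tendsto_diff[OF tendsto_fst[OF v0] tendsto_fst[OF gt]] by simp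
  have gst: "fst (grad C \<rho> (st, s)) = 2 *\<^sub>R (C ** st)" using sst by (simp add: grad_def)
  have al: "a \<longlonglongrightarrow> st" unfolding a_def using tendsto_fst[OF xs] by simp
  have wk: "w k \<in> frechet_subdiff row_ind (a k)" for k
    using vs fsG[OF assms(1)] fsR unfolding a_def w_def by blast
  have "row_ind (a k) = 0" for k using wk[of k] fsR[of "w k" "a k"] by (simp add: row_ind_eq ind_def)
  moreover have "row_ind st = 0" using st by (simp add: row_ind_eq ind_def)
  ultimately have "- 2 *\<^sub>R (C ** st) \<in> limiting_subdiff row_ind st"
    unfolding limiting_subdiff_def using wk al wl gst by (intro CollectI conjI exI[of _ a] exI[of _ w]) auto
  then show "s = st \<and> constrained_critical C st"
    using sst st unfolding constrained_critical_def by (intro conjI bexI[of _ "- 2 *\<^sub>R (C ** st)"]) auto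
next
  assume "s = st \<and> constrained_critical C st"
  then obtain v where sst: "s = st" and st: "st \<in> oblique" and v: "v \<in> limiting_subdiff row_ind st"
    and cv: "2 *\<^sub>R (C ** st) + v = 0"
    unfolding constrained_critical_def by blast
  then obtain a w where wk: "\<forall>k. w k \<in> frechet_subdiff row_ind (a k)" and al: "a \<longlonglongrightarrow> st"
    and wl: "w \<longlonglongrightarrow> v"
    unfolding limiting_subdiff_def mem_Collect_eq by blast
  define xs where "xs k = (a k, a k)" for k
  define vs where "vs k = (2 *\<^sub>R (C ** a k) + w k, 0::real^'r^'n)" for k
  have "vs k \<in> frechet_subdiff (G_rho C \<rho>) (xs k)" for k
    using wk[rule_format, of k] fsR[of "w k" "a k"] unfolding fsG[OF assms(1)] xs_def vs_def by (simp add: grad_def)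
  moreover have "xs \<longlonglongrightarrow> (st, s)" unfolding xs_def sst by (intro tendsto_intros al)
  moreover have "vs \<longlonglongrightarrow> 0"
  proof -
    have "vs \<longlonglongrightarrow> (2 *\<^sub>R (C ** st) + v, 0)" unfolding vs_def
      by (intro tendsto_intros bounded_linear.tendsto[OF bl_mm] al wl)
    then show ?thesis using cv by (simp add: zero_prod_def)
  qed
  moreover have "(\<lambda>k. G_rho C \<rho> (xs k)) \<longlonglongrightarrow> G_rho C \<rho> (st, s)"
  proof -
    have "(\<lambda>k. G_rho C \<rho> (xs k)) = (\<lambda>k. ereal (phi C \<rho> (xs k)))"
      using wk fsR by (auto simp: G_eq xs_def ind_def fun_eq_iff)
    moreover have "G_rho C \<rho> (st, s) = ereal (phi C \<rho> (st, s))" using st by (simp add: G_eq ind_def)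
    moreover have "(\<lambda>k. phi C \<rho> (xs k)) \<longlonglongrightarrow> phi C \<rho> (st, s)"
      using isCont_tendsto_compose[OF phi_cont[OF assms(1)] \<open>xs \<longlonglongrightarrow> (st, s)\<close>] .
    ultimately show ?thesis by (simp add: tendsto_ereal)
  qed
  moreover have "\<bar>G_rho C \<rho> (st, s)\<bar> \<noteq> \<infinity>" using st by (simp add: G_eq ind_def)
  ultimately show "critical_point (G_rho C \<rho>) (st, s)"
    unfolding critical_point_def limiting_subdiff_def mem_Collect_eq by blast
qed

end
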